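(* Let $\eta\in(0,1]$ be rational, $\eta=p/q$ with $p,q>0$ integers, and let $\omega(x)=\eta^{-1}$ for $x\in[0,\eta]$ and $\omega(x)=0$ for $x>\eta$. Let $f\in C^3(\mathbb{R}_+)$ satisfy $f'(\rho)\le0$ and $f(\rho)\ge0$ for all $\rho\ge0$, and suppose there is a constant $M\ge0$ with $\sup_{\rho\ge0}\big(\sum_{k=0}^3|f^{(k)}(\rho)|\big)+1\le M$. Then for every $\rho^*>0$, every $b\in\mathbb{R}$ with $|b|<\rho^*$ and every integer $k>0$, the function $$\rho(t,x)=\rho^*+b\sin\big(2kq\pi(x-f(\rho^* )t)\big),\quad t\ge0,\ x\in\mathbb{R},$$ is a solution of $$\frac{\partial\rho}{\partial t}(t,x)+\frac{\partial}{\partial x}\big(\rho(t,x)v(t,x)\big)=0,\quad v(t,x)=f\Big(\int_x^{x+\eta}\omega(s-x)\rho(t,s)\,ds\Big),\quad \rho(t,x+1)=\rho(t,x),\quad t\ge0,\ x\in\mathbb{R}.$$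
   Context: $\mathbb{R}_+=[0,+\infty)$. *)

theory Defs
  imports "HOL-Analysis.Analysis"
begin

definition omega :: "real \<Rightarrow> real \<Rightarrow> real" where
  "omega \<eta> x = (if 0 \<le> x \<and> x \<le> \<eta> then 1 / \<eta> else 0)"

definition velocity :: "real \<Rightarrow> (real \<Rightarrow> real) \<Rightarrow> (real \<Rightarrow> real \<Rightarrow> real) \<Rightarrow> real \<Rightarrow> real \<Rightarrow> real" where
  "velocity \<eta> f \<rho> t x = f (integral {x..x+\<eta>} (\<lambda>s. omega \<eta> (s - x) * \<rho> t s))"

definition is_solution :: "real \<Rightarrow> (real \<Rightarrow> real) \<Rightarrow> (real \<Rightarrow> real \<Rightarrow> real) \<Rightarrow> bool" where
  "is_solution \<eta> f \<rho> \<longleftrightarrow>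
     (\<forall>t\<ge>0. \<forall>x. \<exists>Dt Dx.
        ((\<lambda>\<tau>. \<rho> \<tau> x) has_real_derivative Dt) (at t within {0..}) \<and>
        ((\<lambda>y. \<rho> t y * velocity \<eta> f \<rho> t y) has_real_derivative Dx) (at x) \<and>
        Dt + Dx = 0 \<and>
        \<rho> t (x + 1) = \<rho> t x)"

end

theory Submission
  imports Defs
begin

theorem proposition3p1:
  fixes p q :: int and \<eta> M :: real and f f1 f2 f3 :: "real \<Rightarrow> real"
  assumes "p > 0" and "q > 0" and "\<eta> = real_of_int p / real_of_int q"
    and "0 < \<eta>" and "\<eta> \<le> 1"
    and "\<And>r. r \<ge> 0 \<Longrightarrow> (f has_real_derivative f1 r) (at r within {0..})"
    and "\<And>r. r \<ge> 0 \<Longrightarrow> (f1 has_real_derivative f2 r) (at r within {0..})"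
    and "\<And>r. r \<ge> 0 \<Longrightarrow> (f2 has_real_derivative f3 r) (at r within {0..})"
    and "continuous_on {0..} f3"
    and "\<And>r. r \<ge> 0 \<Longrightarrow> f1 r \<le> 0"
    and "\<And>r. r \<ge> 0 \<Longrightarrow> f r \<ge> 0"
    and "M \<ge> 0"
    and "\<And>r. r \<ge> 0 \<Longrightarrow> \<bar>f r\<bar> + \<bar>f1 r\<bar> + \<bar>f2 r\<bar> + \<bar>f3 r\<bar> + 1 \<le> M"
  shows "\<forall>\<rho>s b k. \<rho>s > 0 \<longrightarrow> \<bar>b\<bar> < \<rho>s \<longrightarrow> k > (0::int) \<longrightarrow>
           is_solution \<eta> f (\<lambda>t x. \<rho>s + b * sin (2 * real_of_int k * real_of_int q * pi * (x - f \<rho>s * t)))"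
proof (intro allI impI)
  fix \<rho>s b :: real and k :: int
  assume "\<rho>s > 0" "\<bar>b\<bar> < \<rho>s" "k > 0"
  define c where "c = 2 * real_of_int k * real_of_int q * pi"
  define d where "d = f \<rho>s"
  define \<rho> where "\<rho> = (\<lambda>t x. \<rho>s + b * sin (2 * real_of_int k * real_of_int q * pi * (x - f \<rho>s * t)))"
  have \<rho>c: "\<rho> = (\<lambda>t x. \<rho>s + b * sin (c * (x - d * t)))" unfolding \<rho>_def c_def d_def by simp
  have cpos: "c > 0" unfolding c_def using \<open>k > 0\<close> assms(2) by simp
  have ceta: "c * \<eta> = 2 * pi * real_of_int (k * p)"
    unfolding c_def assms(3) using assms(2) by (simp add: field_simps)
  have cosper: "cos (y + c * \<eta>) = cos y" for y
    unfolding ceta using cos_int_2pin[of "k*p"] sin_int_2pin[of "k*p"] by (simp add: cos_add)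
  have vel: "velocity \<eta> f \<rho> t y = d" for t y
  proof -
    let ?F = "\<lambda>s. (\<rho>s * s - b * cos (c * (s - d * t)) / c) / \<eta>"
    have der: "(?F has_vector_derivative (1/\<eta>) * \<rho> t s) (at s within {y..y+\<eta>})" for s
      unfolding \<rho>c has_real_derivative_iff_has_vector_derivative[symmetric]
      using cpos assms(4)
      by (auto intro!: derivative_eq_intros simp: field_simps)
    have "((\<lambda>s. (1/\<eta>) * \<rho> t s) has_integral ?F (y+\<eta>) - ?F y) {y..y+\<eta>}"
      using assms(4) by (intro fundamental_theorem_of_calculus ballI der) simp
    moreover have "c * (y + \<eta> - d * t) = c * (y - d * t) + c * \<eta>"
      by (simp add: algebra_simps)
    hence "?F (y+\<eta>) - ?F y = \<rho>s"
      using assms(4) cosper[of "c * (y - d * t)"] by (simp add: field_simps)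
    ultimately have "((\<lambda>s. (1/\<eta>) * \<rho> t s) has_integral \<rho>s) {y..y+\<eta>}" by simp
    moreover have "integral {y..y+\<eta>} (\<lambda>s. omega \<eta> (s - y) * \<rho> t s) = integral {y..y+\<eta>} (\<lambda>s. (1/\<eta>) * \<rho> t s)"
      by (rule integral_cong) (auto simp: omega_def)
    ultimately show ?thesis unfolding velocity_def d_def by (metis integral_unique)
  qed
  show "is_solution \<eta> f (\<lambda>t x. \<rho>s + b * sin (2 * real_of_int k * real_of_int q * pi * (x - f \<rho>s * t)))"
    unfolding \<rho>_def[symmetric] is_solution_def vel
  proof (intro allI impI exI conjI)
    fix t x :: real
    show "((\<lambda>\<tau>. \<rho> \<tau> x) has_real_derivative (b * cos (c * (x - d * t)) * (- c * d))) (at t within {0..})"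
      unfolding \<rho>c by (auto intro!: derivative_eq_intros simp: algebra_simps)
    show "((\<lambda>y. \<rho> t y * d) has_real_derivative (b * cos (c * (x - d * t)) * c * d)) (at x)"
      unfolding \<rho>c by (auto intro!: derivative_eq_intros simp: algebra_simps)
    show "b * cos (c * (x - d * t)) * (- c * d) + b * cos (c * (x - d * t)) * c * d = 0" by simp
    have "c * (x + 1 - d * t) = c * (x - d * t) + 2 * pi * real_of_int (k * q)"
      unfolding c_def by (simp add: algebra_simps)
    then show "\<rho> t (x + 1) = \<rho> t x" unfolding \<rho>c using cos_int_2pin[of "k*q"] sin_int_2pin[of "k*q"] by (simp add: sin_add)
  qed
qed

end
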